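(* Let $R_0=\mathrm{diag}(1,1,1)$, $R_1=\mathrm{diag}(1,-1,-1)$, $R_2=\mathrm{diag}(-1,1,-1)$, $R_3=\mathrm{diag}(-1,-1,1)$, and for $j\in\{0,1,2,3\}$ let $$U_j=\{R_je^{\Lambda(\omega)}:\omega\in\mathbb{R}^3,\ \|\omega\|_2<\pi\}\subset SO(3),\qquad \mathcal{U}_j=\Big\{\begin{bmatrix}R&p\\0&1\end{bmatrix}: R\in U_j,\ p\in\mathbb{R}^3\Big\}\subset SE(3).$$ Then $U_0\cup U_1\cup U_2\cup U_3=SO(3)$ and $\mathcal{U}_0\cup\mathcal{U}_1\cup\mathcal{U}_2\cup\mathcal{U}_3=SE(3)$.
   Context: $SO(3)=\{R\in\mathbb{R}^{3\times3}:R^\top R=I,\det R=1\}$, $SE(3)=\{\begin{bmatrix}R&p\\0&1\end{bmatrix}:R\in SO(3),p\in\mathbb{R}^3\}$. For $\omega\in\mathbb{R}^3$, $\Lambda(\omega)=\begin{bmatrix}0&-\omega_3&\omega_2\\\omega_3&0&-\omega_1\\-\omega_2&\omega_1&0\end{bmatrix}$, and $e^{(\cdot)}$ is the matrix exponential. *)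

theory Defs
  imports "HOL-Analysis.Analysis"
begin

fun mat_pow :: "real^3^3 \<Rightarrow> nat \<Rightarrow> real^3^3" where
  "mat_pow A 0 = mat 1"
| "mat_pow A (Suc n) = A ** mat_pow A n"

definition mexp :: "real^3^3 \<Rightarrow> real^3^3" where
  "mexp A = (\<Sum>n. (1 / fact n) *\<^sub>R mat_pow A n)"

definition Lambda :: "real^3 \<Rightarrow> real^3^3" where
  "Lambda w = vector [vector [0, - w$3, w$2],
                      vector [w$3, 0, - w$1],
                      vector [- w$2, w$1, 0]]"

definition SO3 :: "(real^3^3) set" where
  "SO3 = {R. transpose R ** R = mat 1 \<and> det R = 1}"

definition hom :: "real^3^3 \<Rightarrow> real^3 \<Rightarrow> real^4^4" where
  "hom R p = vector [vector [R$1$1, R$1$2, R$1$3, p$1],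
                     vector [R$2$1, R$2$2, R$2$3, p$2],
                     vector [R$3$1, R$3$2, R$3$3, p$3],
                     vector [0, 0, 0, 1]]"

definition SE3 :: "(real^4^4) set" where
  "SE3 = {hom R p | R p. R \<in> SO3}"

definition diag3 :: "real \<Rightarrow> real \<Rightarrow> real \<Rightarrow> real^3^3" where
  "diag3 a b c = vector [vector [a, 0, 0], vector [0, b, 0], vector [0, 0, c]]"

definition Rj :: "nat \<Rightarrow> real^3^3" where
  "Rj j = (if j = 0 then diag3 1 1 1 else if j = 1 then diag3 1 (-1) (-1)
           else if j = 2 then diag3 (-1) 1 (-1) else diag3 (-1) (-1) 1)"

definition Uj :: "nat \<Rightarrow> (real^3^3) set" where
  "Uj j = {Rj j ** mexp (Lambda w) | w. norm w < pi}"

definition UUj :: "nat \<Rightarrow> (real^4^4) set" where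
  "UUj j = {hom R p | R p. R \<in> Uj j}"

end

theory Submission
  imports Defs
begin


definition m3 :: "real\<Rightarrow>real\<Rightarrow>real\<Rightarrow>real\<Rightarrow>real\<Rightarrow>real\<Rightarrow>real\<Rightarrow>real\<Rightarrow>real\<Rightarrow>real^3^3" where
 "m3 a b c d e f g h i = vector[vector[a,b,c],vector[d,e,f],vector[g,h,i]]"

lemma m3_nth[simp]:
 "m3 a b c d e f g h i $1$1 = a" "m3 a b c d e f g h i $1$2 = b" "m3 a b c d e f g h i $1$3 = c"
 "m3 a b c d e f g h i $2$1 = d" "m3 a b c d e f g h i $2$2 = e" "m3 a b c d e f g h i $2$3 = f"
 "m3 a b c d e f g h i $3$1 = g" "m3 a b c d e f g h i $3$2 = h" "m3 a b c d e f g h i $3$3 = i"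
  by (simp_all add: m3_def)

lemma m3_eta: "A = m3 (A$1$1) (A$1$2) (A$1$3) (A$2$1) (A$2$2) (A$2$3) (A$3$1) (A$3$2) (A$3$3)"
  by (simp add: vec_eq_iff forall_3)

lemma m3_eq_iff: "m3 a b c d e f g h i = m3 a' b' c' d' e' f' g' h' i' \<longleftrightarrow>
  a=a' \<and> b=b' \<and> c=c' \<and> d=d' \<and> e=e' \<and> f=f' \<and> g=g' \<and> h=h' \<and> i=i'"
  by (auto simp add: vec_eq_iff forall_3)

lemma m3_mult: "m3 a b c d e f g h i ** m3 a' b' c' d' e' f' g' h' i' =
  m3 (a*a'+b*d'+c*g') (a*b'+b*e'+c*h') (a*c'+b*f'+c*i')
     (d*a'+e*d'+f*g') (d*b'+e*e'+f*h') (d*c'+e*f'+f*i')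
     (g*a'+h*d'+i*g') (g*b'+h*e'+i*h') (g*c'+h*f'+i*i')"
  by (simp add: vec_eq_iff forall_3 matrix_matrix_mult_def sum_3)

lemma m3_transpose: "transpose (m3 a b c d e f g h i) = m3 a d g b e h c f i"
  by (simp add: vec_eq_iff forall_3 transpose_def)

lemma m3_one: "(mat 1 :: real^3^3) = m3 1 0 0 0 1 0 0 0 1"
  by (simp add: vec_eq_iff forall_3 mat_def)

lemma m3_zero: "(0 :: real^3^3) = m3 0 0 0 0 0 0 0 0 0"
  by (simp add: vec_eq_iff forall_3)

lemma m3_add: "m3 a b c d e f g h i + m3 a' b' c' d' e' f' g' h' i' =
  m3 (a+a') (b+b') (c+c') (d+d') (e+e') (f+f') (g+g') (h+h') (i+i')"
  by (simp add: vec_eq_iff forall_3)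

lemma m3_scaleR: "r *\<^sub>R m3 a b c d e f g h i = m3 (r*a) (r*b) (r*c) (r*d) (r*e) (r*f) (r*g) (r*h) (r*i)"
  by (simp add: vec_eq_iff forall_3)

lemma m3_det: "det (m3 a b c d e f g h i) = a*e*i + b*f*g + c*d*h - a*f*h - b*d*i - c*e*g"
  by (simp add: det_3)

lemma Lambda_m3: "Lambda w = m3 0 (-w$3) (w$2) (w$3) 0 (-w$1) (-w$2) (w$1) 0"
  by (simp add: Lambda_def m3_def)

lemma diag3_m3: "diag3 a b c = m3 a 0 0 0 b 0 0 0 c"
  by (simp add: diag3_def m3_def)

lemma SO3_m3: "m3 a b c d e f g h i \<in> SO3 \<longleftrightarrow>
  a*a+d*d+g*g = 1 \<and> a*b+d*e+g*h = 0 \<and> a*c+d*f+g*i = 0 \<and>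
  b*a+e*d+h*g = 0 \<and> b*b+e*e+h*h = 1 \<and> b*c+e*f+h*i = 0 \<and>
  c*a+f*d+i*g = 0 \<and> c*b+f*e+i*h = 0 \<and> c*c+f*f+i*i = 1 \<and>
  a*e*i + b*f*g + c*d*h - a*f*h - b*d*i - c*e*g = 1"
  unfolding SO3_def by (simp add: m3_transpose m3_mult m3_one m3_eq_iff m3_det)



lemma cof_poly:
  fixes a b c d e f g h i :: real
  assumes r: "a*a+b*b+c*c = 1" "d*d+e*e+f*f = 1" "g*g+h*h+i*i=1"
    "a*d+b*e+c*f = 0" "a*g+b*h+c*i = 0" "d*g+e*h+f*i=0"
   and D: "a*e*i + b*f*g + c*d*h - a*f*h - b*d*i - c*e*g = 1"
  shows "a = e*i - f*h"
proof -
  have "(e*i-f*h)*(a*a+b*b+c*c) + (c*h-b*i)*(a*d+b*e+c*f) + (b*f-c*e)*(a*g+b*h+c*i)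
     = a*(a*e*i + b*f*g + c*d*h - a*f*h - b*d*i - c*e*g)" by algebra
  then show ?thesis using r D by simp
qed


lemma cof_all:
  fixes a b c d e f g h i :: real
  assumes r: "a*a+b*b+c*c = 1" "d*d+e*e+f*f = 1" "g*g+h*h+i*i=1"
    "a*d+b*e+c*f = 0" "a*g+b*h+c*i = 0" "d*g+e*h+f*i=0"
   and D: "a*e*i + b*f*g + c*d*h - a*f*h - b*d*i - c*e*g = 1"
  shows "a = e*i - f*h" "b = f*g - d*i" "c = d*h - e*g" "d = h*c - i*b" "e = i*a - g*c" "f = g*b - h*a" "g = b*f - c*e" "h = c*d - a*f" "i = a*e - b*d"
proof -
  show "a = e*i - f*h" using cof_poly[of a b c d e f g h i] r D by (simp add: algebra_simps)
  show "b = f*g - d*i" using cof_poly[of b c a e f d h i g] r D by (simp add: algebra_simps)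
  show "c = d*h - e*g" using cof_poly[of c a b f d e i g h] r D by (simp add: algebra_simps)
  show "d = h*c - i*b" using cof_poly[of d e f g h i a b c] r D by (simp add: algebra_simps)
  show "e = i*a - g*c" using cof_poly[of e f d h i g b c a] r D by (simp add: algebra_simps)
  show "f = g*b - h*a" using cof_poly[of f d e i g h c a b] r D by (simp add: algebra_simps)
  show "g = b*f - c*e" using cof_poly[of g h i a b c d e f] r D by (simp add: algebra_simps)
  show "h = c*d - a*f" using cof_poly[of h i g b c a e f d] r D by (simp add: algebra_simps)
  show "i = a*e - b*d" using cof_poly[of i g h c a b f d e] r D by (simp add: algebra_simps)
qed

lemma key_poly2:
  fixes a b c d e f g h i :: real
  assumes c: "a*a+d*d+g*g = 1" "a*b+d*e+g*h = 0" "a*c+d*f+g*i = 0"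
   "b*b+e*e+h*h = 1" "b*c+e*f+h*i = 0" "c*c+f*f+i*i = 1"
  and r: "a*a+b*b+c*c = 1" "d*d+e*e+f*f = 1" "g*g+h*h+i*i=1"
    "a*d+b*e+c*f = 0" "a*g+b*h+c*i = 0" "d*g+e*h+f*i=0"
   and D: "a*e*i + b*f*g + c*d*h - a*f*h - b*d*i - c*e*g = 1"
  shows "(1+(a+e+i))*(2*a - ((a+e+i)-1)) = (h-f)*(h-f)"
        "(1+(a+e+i))*(2*e - ((a+e+i)-1)) = (c-g)*(c-g)"
        "(1+(a+e+i))*(2*i - ((a+e+i)-1)) = (d-b)*(d-b)"
        "(1+(a+e+i))*(b+d) = (h-f)*(c-g)"
        "(1+(a+e+i))*(c+g) = (h-f)*(d-b)"
        "(1+(a+e+i))*(f+h) = (c-g)*(d-b)"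
        "(h-f)*(h-f) + (c-g)*(c-g) + (d-b)*(d-b) = (1+(a+e+i))*(3-(a+e+i))"
        "a+e+i = 3 \<Longrightarrow> a = 1 \<and> e = 1 \<and> i = 1 \<and> b = 0 \<and> c = 0 \<and> d = 0 \<and> f = 0 \<and> g = 0 \<and> h = 0"
        "a+e+i \<le> 3"
proof -
  note cf = cof_all[OF r D]
  have H: "a*a+d*d+g*g = 1" "a*b+d*e+g*h = 0" "a*c+d*f+g*i = 0"
   "b*b+e*e+h*h = 1" "b*c+e*f+h*i = 0" "c*c+f*f+i*i = 1"
   "a*a+b*b+c*c = 1" "d*d+e*e+f*f = 1" "g*g+h*h+i*i=1"
    "a*d+b*e+c*f = 0" "a*g+b*h+c*i = 0" "d*g+e*h+f*i=0" 
   "a*e*i + b*f*g + c*d*h - a*f*h - b*d*i - c*e*g = 1" using c r D by (simp_all add: algebra_simps)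
  note HH = cf[simplified algebra_simps] H[simplified algebra_simps]
  show "(1+(a+e+i))*(2*a - ((a+e+i)-1)) = (h-f)*(h-f)"
        "(1+(a+e+i))*(2*e - ((a+e+i)-1)) = (c-g)*(c-g)"
        "(1+(a+e+i))*(2*i - ((a+e+i)-1)) = (d-b)*(d-b)"
        "(1+(a+e+i))*(b+d) = (h-f)*(c-g)"
        "(1+(a+e+i))*(c+g) = (h-f)*(d-b)"
        "(1+(a+e+i))*(f+h) = (c-g)*(d-b)"
        "(h-f)*(h-f) + (c-g)*(c-g) + (d-b)*(d-b) = (1+(a+e+i))*(3-(a+e+i))"
    by (simp_all add: algebra_simps; use HH in linarith)+
  have sq: "a*a \<ge> 0" "b*b \<ge> 0" "c*c \<ge> 0" "d*d \<ge> 0" "e*e \<ge> 0" "f*f \<ge> 0"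
     "g*g \<ge> 0" "h*h \<ge> 0" "i*i \<ge> 0" by simp_all
  have le: "a \<le> 1" "e \<le> 1" "i \<le> 1" using r sq
    by (smt (verit) mult_le_cancel_left1)+
  then show "a+e+i \<le> 3" by simp
  show "a+e+i = 3 \<Longrightarrow> a = 1 \<and> e = 1 \<and> i = 1 \<and> b = 0 \<and> c = 0 \<and> d = 0 \<and> f = 0 \<and> g = 0 \<and> h = 0"
  proof -
    assume "a+e+i = 3"
    then have 1: "a = 1" "e = 1" "i = 1" using le by simp_all
    then have "b*b = 0" "c*c = 0" "d*d=0" "f*f=0" "g*g=0" "h*h=0" using r c sq by simp_all
    then show ?thesis using 1 by simp
  qed
qed



lemma mult_scaleR_right: "(A::real^3^3) ** (r *\<^sub>R X) = r *\<^sub>R (A ** X)"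
  by (simp add: matrix_matrix_mult_def vec_eq_iff sum_distrib_left mult_ac scaleR_sum_right)

definition msq :: "real^3 \<Rightarrow> real" where "msq w = w$1*w$1 + w$2*w$2 + w$3*w$3"

lemma K3: "Lambda w ** (Lambda w ** Lambda w) = (- msq w) *\<^sub>R Lambda w"
  by (simp add: Lambda_m3 m3_mult m3_scaleR m3_eq_iff msq_def algebra_simps)

lemma mat_pow_K: "mat_pow (Lambda w) n = (if n = 0 then mat 1 else if odd n
   then (- msq w)^((n-1) div 2) *\<^sub>R Lambda w
   else (- msq w)^((n-2) div 2) *\<^sub>R (Lambda w ** Lambda w))"
proof (induction n)
  case 0
  then show ?case by simp
next
  case (Suc n)
  show ?case
  proof (cases "n = 0")
    case True
    then show ?thesis by (simp add: matrix_mul_rid)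
  next
    case False
    show ?thesis
    proof (cases "odd n")
      case True
      then obtain k where k: "n = 2*k+1" by (metis oddE)
      show ?thesis using Suc.IH False True by (simp add: k mult_scaleR_right)
    next
      case ev: False
      then obtain j where j: "n = 2*j" by (metis evenE)
      with False obtain k where "j = Suc k" by (metis gr0_implies_Suc neq0_conv mult_0_right)
      with j have k: "n = 2*k+2" by simp
      show ?thesis using Suc.IH False ev by (simp add: k mult_scaleR_right K3)
    qed
  qed
qed

lemma norm_sq: "norm (w::real^3) ^ 2 = msq w"
  by (simp add: power2_norm_eq_inner inner_vec_def sum_3 msq_def)

lemma mexp_zero: "mexp (Lambda 0) = mat 1"
proof -
  have L: "Lambda 0 = 0" by (simp add: Lambda_m3 m3_zero)
  have "(\<lambda>n. (1 / fact n) *\<^sub>R mat_pow (Lambda 0) n) = (\<lambda>n. if n = 0 then mat 1 else 0)"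
  proof (rule ext)
    fix n
    show "(1 / fact n) *\<^sub>R mat_pow (Lambda 0) n = (if n = 0 then mat 1 else 0)"
      using mat_pow_K[of 0 n] by (simp add: L)
  qed
  moreover have "(\<lambda>n. if n = 0 then (mat 1::real^3^3) else 0) sums mat 1"
    using sums_single[of 0 "\<lambda>_. mat 1 :: real^3^3"] by simp
  ultimately have "(\<lambda>n. (1 / fact n) *\<^sub>R mat_pow (Lambda 0) n) sums mat 1" by simp
  from sums_unique[OF this] show ?thesis unfolding mexp_def by simp
qed

lemma mexp_rod:
  assumes "w \<noteq> 0"
  defines "th \<equiv> norm w"
  shows "mexp (Lambda w) = mat 1 + (sin th / th) *\<^sub>R Lambda w
             + ((1 - cos th) / th^2) *\<^sub>R (Lambda w ** Lambda w)"
proof -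
  have th: "th > 0" using assms by simp
  have m: "msq w = th^2" using norm_sq th_def by simp
  define al where "al n = (if n = 0 then 1 else 0::real)" for n :: nat
  define be where "be n = sin_coeff n * th^n / th" for n :: nat
  define ga where "ga n = (if n = 0 then 0 else - (cos_coeff n * th^n)) / th^2" for n :: nat
  have eq: "(1 / fact n) *\<^sub>R mat_pow (Lambda w) n =
     al n *\<^sub>R mat 1 + be n *\<^sub>R Lambda w + ga n *\<^sub>R (Lambda w ** Lambda w)" for n :: nat
  proof (cases "n = 0")
    case True
    then show ?thesis by (simp add: al_def be_def ga_def mat_pow_K sin_coeff_def)
  next
    case False
    show ?thesis
    proof (cases "odd n")
      case True
      then obtain k where k: "n = 2*k+1" by (metis oddE)
      have p: "th ^ (2*k+1) / th = (th^2)^k" using th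
        by (simp add: power_mult[symmetric] power_add)
      have sc: "sin_coeff n = (-1)^k / fact n" by (simp add: sin_coeff_def k)
      have "be n = (-1)^k / fact n * (th ^ (2*k+1) / th)" unfolding be_def sc by (simp add: k)
      also have "\<dots> = ((-1)^k * (th^2)^k) / fact n" unfolding p by simp
      also have "\<dots> = (- msq w)^k / fact n" unfolding m by (simp add: power_minus[of "th^2"])
      finally have bn: "be n = (- msq w)^k / fact n" .
      have mp: "mat_pow (Lambda w) n = (- msq w)^k *\<^sub>R Lambda w"
        by (subst mat_pow_K) (simp add: k)
      have z: "al n = 0" "ga n = 0" using False True by (simp_all add: al_def ga_def cos_coeff_def)
      show ?thesis unfolding mp z bn by simp
    next
      case ev: False
      then obtain j where j: "n = 2*j" by (metis evenE)
      with False obtain k where "j = Suc k" by (metis gr0_implies_Suc neq0_conv mult_0_right)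
      with j have k: "n = 2*k+2" by simp
      have p: "th ^ (2*k+2) / th^2 = (th^2)^k" using th
        by (simp add: power_add power_mult power2_eq_square[of th])
      have cc: "cos_coeff n = - ((-1)^k / fact n)" by (simp add: cos_coeff_def k)
      have "ga n = (-1)^k / fact n * (th ^ (2*k+2) / th^2)" unfolding ga_def cc by (simp add: k)
      also have "\<dots> = ((-1)^k * (th^2)^k) / fact n" unfolding p by simp
      also have "\<dots> = (- msq w)^k / fact n" unfolding m by (simp add: power_minus[of "th^2"])
      finally have gn: "ga n = (- msq w)^k / fact n" .
      have mp: "mat_pow (Lambda w) n = (- msq w)^k *\<^sub>R (Lambda w ** Lambda w)"
        by (subst mat_pow_K) (simp add: k)
      have z: "al n = 0" "be n = 0" using False ev by (simp_all add: al_def be_def sin_coeff_def)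
      show ?thesis unfolding mp z gn by simp
    qed
  qed
  have s1: "al sums 1" unfolding al_def using sums_single[of 0 "\<lambda>_. 1::real"] by simp
  have s2: "be sums (sin th / th)" unfolding be_def
    using sums_divide[OF sin_converges[of th], of th] by simp
  have c1: "(\<lambda>n. cos_coeff n * th^n - (if n = 0 then 1 else 0)) sums (cos th - 1)"
    by (rule sums_diff[OF cos_converges[of th] sums_single[of 0 "\<lambda>_. 1::real"], simplified])
  have c2: "(\<lambda>n. - (cos_coeff n * th^n - (if n = 0 then 1 else 0))) sums (- (cos th - 1))"
    by (rule sums_minus[OF c1])
  have c3: "(\<lambda>n. - (cos_coeff n * th^n - (if n = 0 then 1 else 0))) =
     (\<lambda>n. (if n = 0 then 0 else - (cos_coeff n * th^n)))"
    by (rule ext) (simp add: cos_coeff_def)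
  have "(\<lambda>n. (if n = 0 then 0 else - (cos_coeff n * th^n))) sums (1 - cos th)"
    using c2 unfolding c3 by simp
  then have s3: "ga sums ((1 - cos th) / th^2)" unfolding ga_def by (rule sums_divide)
  have "(\<lambda>n. al n *\<^sub>R mat 1 + be n *\<^sub>R Lambda w + ga n *\<^sub>R (Lambda w ** Lambda w)) sums
     (1 *\<^sub>R mat 1 + (sin th / th) *\<^sub>R Lambda w + ((1 - cos th) / th^2) *\<^sub>R (Lambda w ** Lambda w))"
    by (rule sums_add[OF sums_add[OF sums_scaleR_left[OF s1] sums_scaleR_left[OF s2]] sums_scaleR_left[OF s3]])
  then have "(\<lambda>n. (1 / fact n) *\<^sub>R mat_pow (Lambda w) n) sums
     (1 *\<^sub>R mat 1 + (sin th / th) *\<^sub>R Lambda w + ((1 - cos th) / th^2) *\<^sub>R (Lambda w ** Lambda w))"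
    unfolding eq .
  from sums_unique[OF this] show ?thesis unfolding mexp_def by simp
qed



lemma rod_SO3:
  fixes A B m cc sn :: real
  assumes h1: "A*A = 2*B - B*B*m" and h2: "B*m = 1 - cc" and h3: "A*A*m = sn * sn"
    and h4: "sn * sn + cc*cc = 1" and hm: "m = msq w"
  shows "mat 1 + A *\<^sub>R Lambda w + B *\<^sub>R (Lambda w ** Lambda w) \<in> SO3"
proof -
  define x where "x = w$1"
  define y where "y = w$2"
  define z where "z = w$3"
  have m: "m = x*x+y*y+z*z" using hm by (simp add: msq_def x_def y_def z_def)
  show ?thesis
    unfolding Lambda_m3 m3_mult m3_scaleR m3_add m3_one SO3_m3 x_def[symmetric] y_def[symmetric] z_def[symmetric]
    using h1 h2 h3 h4 m by (intro conjI; algebra)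
qed


lemma mexp_SO3: "mexp (Lambda w) \<in> SO3"
proof (cases "w = 0")
  case True
  then show ?thesis by (simp add: mexp_zero SO3_def)
next
  case False
  define th where "th = norm w"
  have th: "th > 0" using False th_def by simp
  have m: "msq w = th^2" using norm_sq th_def by simp
  define A where "A = sin th / th"
  define B where "B = (1 - cos th) / th^2"
  have sc: "sin th * sin th + cos th * cos th = 1" using sin_cos_squared_add[of th]
    by (simp add: power2_eq_square)
  have h2: "B * th^2 = 1 - cos th" using th by (simp add: B_def)
  have h3: "A * A * th^2 = sin th * sin th" using th by (simp add: A_def power2_eq_square)
  have h1: "A * A = 2 * B - B * B * th^2"
  proof -
    have "A * A * th^2 = (2 * B - B * B * th^2) * th^2"
      using h2 h3 sc by algebra
    then show ?thesis using th by simp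
  qed
  show ?thesis unfolding mexp_rod[OF False] th_def[symmetric] A_def[symmetric] B_def[symmetric]
    by (rule rod_SO3[OF h1 h2 h3 sc m[symmetric]])
qed


lemma SO3_mult: assumes "P \<in> SO3" "Q \<in> SO3" shows "P ** Q \<in> SO3"
proof -
  have "transpose (P ** Q) ** (P ** Q) = transpose Q ** ((transpose P ** P) ** Q)"
    by (simp add: matrix_transpose_mul matrix_mul_assoc)
  also have "\<dots> = mat 1" using assms by (simp add: SO3_def matrix_mul_lid)
  finally show ?thesis using assms by (simp add: SO3_def det_mul)
qed

lemma SO3_right: assumes "P \<in> SO3" shows "P ** transpose P = mat 1"
  using assms matrix_left_right_inverse[of P "transpose P"] by (simp add: SO3_def)

lemma Rj_m3: "Rj j = (if j = 0 then m3 1 0 0 0 1 0 0 0 1 else if j = 1 then m3 1 0 0 0 (-1) 0 0 0 (-1)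
   else if j = 2 then m3 (-1) 0 0 0 1 0 0 0 (-1) else m3 (-1) 0 0 0 (-1) 0 0 0 1)"
  by (simp add: Rj_def diag3_m3)

lemma Rj_SO3: "Rj j \<in> SO3"
  by (simp add: Rj_m3 SO3_m3)

lemma Rj_sq: "Rj j ** Rj j = mat 1"
  by (simp add: Rj_m3 m3_mult m3_one)

lemma choose_j: fixes Q :: "real^3^3" shows "\<exists>j\<in>{0,1,2,3::nat}. (Rj j ** Q)$1$1 + (Rj j ** Q)$2$2 + (Rj j ** Q)$3$3 > -1"
proof -
  obtain a b c d e f g h i where Q: "Q = m3 a b c d e f g h i" using m3_eta by blast
  show ?thesis unfolding Q by (simp add: Rj_m3 m3_mult) linarith
qed


lemma log_exists:
  assumes P: "P \<in> SO3" and tr: "P$1$1 + P$2$2 + P$3$3 > -1"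
  shows "\<exists>w. norm w < pi \<and> mexp (Lambda w) = P"
proof -
  obtain a b c d e f g h i where Pm: "P = m3 a b c d e f g h i" using m3_eta by blast
  have cols: "a*a+d*d+g*g = 1" "a*b+d*e+g*h = 0" "a*c+d*f+g*i = 0"
   "b*b+e*e+h*h = 1" "b*c+e*f+h*i = 0" "c*c+f*f+i*i = 1"
   and det: "a*e*i + b*f*g + c*d*h - a*f*h - b*d*i - c*e*g = 1"
    using P unfolding Pm SO3_m3 by auto
  have rows: "a*a+b*b+c*c = 1" "d*d+e*e+f*f = 1" "g*g+h*h+i*i=1"
    "a*d+b*e+c*f = 0" "a*g+b*h+c*i = 0" "d*g+e*h+f*i=0"
    using SO3_right[OF P] unfolding Pm m3_transpose m3_mult m3_one m3_eq_iff by auto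
  note K = key_poly2[OF cols rows det]
  define t where "t = a+e+i"
  have t1: "t > -1" using tr unfolding Pm t_def by simp
  show ?thesis
  proof (cases "t = 3")
    case True
    then have "P = mat 1" using K(8) unfolding Pm m3_one t_def by simp
    then show ?thesis using mexp_zero by (intro exI[of _ 0]) simp
  next
    case False
    then have t3: "t < 3" using K(9) unfolding t_def by simp
    define co where "co = (t-1)/2"
    have co: "-1 < co" "co < 1" using t1 t3 unfolding co_def by simp_all
    define th where "th = arccos co"
    have th: "0 < th" "th < pi" using arccos_lt_bounded[OF co] unfolding th_def by simp_all
    have cth: "cos th = co" using co unfolding th_def by simp
    define sn where "sn = sin th"
    have sn: "sn > 0" using sin_gt_zero[OF th] unfolding sn_def .
    have sn2: "sn * sn = 1 - co * co" using sin_cos_squared_add[of th] unfolding sn_def cth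
      by (simp add: power2_eq_square algebra_simps)
    define kk where "kk = th / (2 * sn)"
    define w where "w = (vector [kk*(h-f), kk*(c-g), kk*(d-b)] :: real^3)"
    have "msq w = kk*kk*((h-f)*(h-f) + (c-g)*(c-g) + (d-b)*(d-b))"
      unfolding msq_def w_def by (simp add: algebra_simps)
    also have "\<dots> = kk*kk*((1+t)*(3-t))" using K(7) unfolding t_def by simp
    also have "(1+t)*(3-t) = 4 * (sn * sn)" unfolding sn2 co_def by (simp add: field_simps; simp add: algebra_simps)
    also have "kk*kk*(4 * (sn * sn)) = th^2" unfolding kk_def using sn by (simp add: power2_eq_square field_simps)
    finally have "norm w ^ 2 = th^2" using norm_sq by simp
    then have nw: "norm w = th" using th by (simp add: power2_eq_iff_nonneg)
    then have w0: "w \<noteq> 0" using th by auto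
    define A where "A = sn / th"
    define B where "B = (1 - co) / th^2"
    have ex: "mexp (Lambda w) = mat 1 + A *\<^sub>R Lambda w + B *\<^sub>R (Lambda w ** Lambda w)"
      unfolding mexp_rod[OF w0] nw A_def B_def sn_def cth ..
    have hA: "A * kk = 1/2" unfolding A_def kk_def using sn th by simp
    have "B * kk * kk = (1 - co) / (4 * (sn * sn))" unfolding B_def kk_def using sn th
      by (simp add: power2_eq_square field_simps)
    also have "\<dots> = (1 - co) / (4 * ((1 - co) * (1 + co)))" unfolding sn2 by (simp add: algebra_simps)
    also have "\<dots> = 1 / (4 * (1 + co))" using co by simp
    also have "4 * (1 + co) = 2 * (1 + t)" unfolding co_def by (simp add: field_simps)
    finally have hB: "B * kk * kk = 1 / (2 * (1 + t))" .
    have tp: "1 + t \<noteq> 0" using t1 by simp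
    have Q: "B*kk*kk*((h-f)*(h-f)) = (2*a - (t-1))/2"
         "B*kk*kk*((c-g)*(c-g)) = (2*e - (t-1))/2"
         "B*kk*kk*((d-b)*(d-b)) = (2*i - (t-1))/2"
         "B*kk*kk*((h-f)*(c-g)) = (b+d)/2"
         "B*kk*kk*((h-f)*(d-b)) = (c+g)/2"
         "B*kk*kk*((c-g)*(d-b)) = (f+h)/2"
      unfolding hB K(1-6)[folded t_def, symmetric] using tp by (simp_all add: field_simps)
    have "mat 1 + A *\<^sub>R Lambda w + B *\<^sub>R (Lambda w ** Lambda w) = P"
      unfolding Pm Lambda_m3 m3_mult m3_scaleR m3_add m3_one m3_eq_iff w_def vector_3
      using Q hA unfolding t_def
      by (intro conjI; algebra)
    then show ?thesis using nw th ex by auto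
  qed
qed


lemma Uj_SO3: "Uj j \<subseteq> SO3"
  unfolding Uj_def using Rj_SO3 mexp_SO3 SO3_mult by blast

lemma SO3_Uj: assumes "Q \<in> SO3" shows "\<exists>j\<in>{0,1,2,3::nat}. Q \<in> Uj j"
proof -
  obtain j where j: "j \<in> {0,1,2,3::nat}" and tr: "(Rj j ** Q)$1$1 + (Rj j ** Q)$2$2 + (Rj j ** Q)$3$3 > -1"
    using choose_j[of Q] by blast
  have "Rj j ** Q \<in> SO3" using SO3_mult[OF Rj_SO3 assms] .
  then obtain w where w: "norm w < pi" "mexp (Lambda w) = Rj j ** Q"
    using log_exists tr by blast
  have "Rj j ** mexp (Lambda w) = Q"
    unfolding w(2) by (simp add: matrix_mul_assoc Rj_sq matrix_mul_lid)
  then have "Q \<in> Uj j" unfolding Uj_def using w(1) by blast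
  then show ?thesis using j by blast
qed

theorem mainTheorem5:
  shows "Uj 0 \<union> Uj 1 \<union> Uj 2 \<union> Uj 3 = SO3
         \<and> UUj 0 \<union> UUj 1 \<union> UUj 2 \<union> UUj 3 = SE3"
proof -
  have U: "Uj 0 \<union> Uj 1 \<union> Uj 2 \<union> Uj 3 = SO3"
  proof
    show "Uj 0 \<union> Uj 1 \<union> Uj 2 \<union> Uj 3 \<subseteq> SO3" using Uj_SO3 by blast
    show "SO3 \<subseteq> Uj 0 \<union> Uj 1 \<union> Uj 2 \<union> Uj 3" using SO3_Uj by blast
  qed
  have UU: "UUj 0 \<union> UUj 1 \<union> UUj 2 \<union> UUj 3 = {hom R p | R p. R \<in> SO3}"
    unfolding UUj_def U[symmetric] by blast
  show ?thesis using U UU unfolding SE3_def by blast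
qed


end
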